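(* Let $H$ be a $p$-variate cumulative distribution function with continuous margins $F_1,\ldots,F_p$, let $\hat H_n$ be random $p$-variate cumulative distribution functions and $\hat F_{n,1},\ldots,\hat F_{n,p}$ random univariate cumulative distribution functions, and suppose there exists $0<r_n\to\infty$ such that, in $\ell^\infty(\mathbb R^p)\times\ell^\infty(\mathbb R)\times\cdots\times\ell^\infty(\mathbb R)$ with the topology of uniform convergence, \[\bigl(r_n(\hat H_n-H);\,r_n(\hat F_{n,1}-F_1),\ldots,r_n(\hat F_{n,p}-F_p)\bigr)\rightsquigarrow(\alpha\circ\mathbf F;\,\beta_1\circ F_1,\ldots,\beta_p\circ F_p),\qquad n\to\infty,\] where $\alpha$ is a random element of $\ell^\infty([0,1]^p)$ and $\beta_j$ random elements of $\ell^\infty([0,1])$ such that $\alpha\circ\mathbf F$ and $\beta_j\circ F_j$ have continuous trajectories on $[-\infty,\infty]^p$ and $[-\infty,\infty]$, respectively, almost surely. Then, with probability one, the trajectories of $\alpha$ and $\beta_1,\ldots,\beta_p$ are continuous (on $[0,1]^p$ and $[0,1]$ respectively).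
   Context: $\mathbf F(\mathbf x)=(F_1(x_1),\ldots,F_p(x_p))$, with $F_j(-\infty)=0$, $F_j(+\infty)=1$. $\ell^\infty(T)$ is the space of bounded real functions on $T$ with the supremum norm; $\rightsquigarrow$ denotes Hoffmann-Jørgensen weak convergence. *)

theory Defs
  imports "HOL-Probability.Probability"
begin

definition mcdf :: "(real^'p::finite) measure \<Rightarrow> real^'p \<Rightarrow> real" where
  "mcdf \<mu> = (\<lambda>x. measure \<mu> {y. \<forall>j. y $ j \<le> x $ j})"

definition is_mcdf :: "(real^'p::finite \<Rightarrow> real) \<Rightarrow> bool" where
  "is_mcdf G \<longleftrightarrow> (\<exists>\<mu>. prob_space \<mu> \<and> sets \<mu> = sets borel \<and> G = mcdf \<mu>)"

definition is_cdf :: "(real \<Rightarrow> real) \<Rightarrow> bool" where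
  "is_cdf G \<longleftrightarrow> (\<exists>\<mu>. real_distribution \<mu> \<and> G = cdf \<mu>)"

definition ext_cdf :: "(real \<Rightarrow> real) \<Rightarrow> ereal \<Rightarrow> real" where
  "ext_cdf G x = (if x = -\<infinity> then 0 else if x = \<infinity> then 1 else G (real_of_ereal x))"

definition linf :: "('t \<Rightarrow> real) set" where
  "linf = {f. bounded (range f)}"

definition sup_dist :: "('t \<Rightarrow> real) \<Rightarrow> ('t \<Rightarrow> real) \<Rightarrow> real" where
  "sup_dist f g = (SUP t. \<bar>f t - g t\<bar>)"

definition bc_functional :: "(('t \<Rightarrow> real) \<Rightarrow> real) \<Rightarrow> bool" where
  "bc_functional h \<longleftrightarrow> bounded (h ` linf) \<and>
     (\<forall>f\<in>linf. \<forall>e>0. \<exists>d>0. \<forall>g\<in>linf. sup_dist f g < d \<longrightarrow> \<bar>h f - h g\<bar> < e)"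

definition outer_exp :: "'w measure \<Rightarrow> ('w \<Rightarrow> real) \<Rightarrow> real" where
  "outer_exp M X = Inf {integral\<^sup>L M U | U. integrable M U \<and> (\<forall>\<omega>\<in>space M. X \<omega> \<le> U \<omega>)}"

definition hj_weak_conv ::
  "(nat \<Rightarrow> 'w measure) \<Rightarrow> (nat \<Rightarrow> 'w \<Rightarrow> 't \<Rightarrow> real) \<Rightarrow> 'v measure \<Rightarrow> ('v \<Rightarrow> 't \<Rightarrow> real) \<Rightarrow> bool"
where
  "hj_weak_conv Mn X M Y \<longleftrightarrow>
     (\<forall>h :: ('t \<Rightarrow> real) \<Rightarrow> real. bc_functional h \<longrightarrow>
        (\<lambda>n. outer_exp (Mn n) (\<lambda>\<omega>. h (X n \<omega>))) \<longlonglongrightarrow> outer_exp M (\<lambda>\<omega>. h (Y \<omega>)))"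

end

theory Submission
  imports Defs
begin


lemma compact_vec_UNIV:
  assumes "compact (UNIV :: 'a::topological_space set)"
  shows "compact (UNIV :: ('a ^ 'n::finite) set)"
proof -
  have cs: "compact_space (product_topology (\<lambda>_::'n. (euclidean :: 'a topology)) UNIV)"
    using assms by (subst compact_space_product_topology) (simp add: compact_space_def)
  have cm: "continuous_map (product_topology (\<lambda>_::'n. (euclidean :: 'a topology)) UNIV) euclidean vec_lambda"
    unfolding continuous_map
  proof (intro conjI allI impI)
    show "vec_lambda ` topspace (product_topology (\<lambda>_::'n. (euclidean :: 'a topology)) UNIV) \<subseteq> topspace euclidean"
      by simp
  next
    fix U :: "('a^'n) set" assume "openin euclidean U"
    hence oU: "open U" by simp
    show "openin (product_topology (\<lambda>_. euclidean) UNIV)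
        {x \<in> topspace (product_topology (\<lambda>_. euclidean) UNIV). vec_lambda x \<in> U}"
    proof (subst openin_subopen, intro ballI)
      fix x :: "'n \<Rightarrow> 'a" assume x: "x \<in> {x \<in> topspace (product_topology (\<lambda>_::'n. (euclidean :: 'a topology)) UNIV). vec_lambda x \<in> U}"
      hence xU: "vec_lambda x \<in> U" by simp
      obtain A where A: "\<forall>i. open (A i) \<and> (vec_lambda x)$i \<in> A i"
          "\<forall>y. (\<forall>i. y$i \<in> A i) \<longrightarrow> y \<in> U"
        using oU[unfolded open_vec_def, rule_format, OF xU] by (elim exE conjE) blast
      show "\<exists>T. openin (product_topology (\<lambda>_. euclidean) UNIV) T \<and> x \<in> T \<and>
           T \<subseteq> {x \<in> topspace (product_topology (\<lambda>_. euclidean) UNIV). vec_lambda x \<in> U}"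
      proof (intro exI conjI)
        show "openin (product_topology (\<lambda>_::'n. (euclidean :: 'a topology)) UNIV) (\<Pi>\<^sub>E i\<in>UNIV. A i)"
          by (rule product_topology_basis) (use A(1) in simp_all)
        show "x \<in> (\<Pi>\<^sub>E i\<in>UNIV. A i)" using A(1) by (simp add: PiE_iff)
        show "(\<Pi>\<^sub>E i\<in>UNIV. A i) \<subseteq> {x \<in> topspace (product_topology (\<lambda>_. euclidean) UNIV). vec_lambda x \<in> U}"
        proof
          fix y assume "y \<in> (\<Pi>\<^sub>E i\<in>UNIV. A i)"
          hence "\<forall>i. (vec_lambda y :: 'a^'n) $ i \<in> A i" by (simp add: PiE_iff)
          hence "vec_lambda y \<in> U" using A(2) by blast
          thus "y \<in> {x \<in> topspace (product_topology (\<lambda>_. euclidean) UNIV). vec_lambda x \<in> U}"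
            by (simp add: PiE_iff)
        qed
      qed
    qed
  qed
  have "compactin euclidean (vec_lambda ` topspace (product_topology (\<lambda>_::'n. (euclidean :: 'a topology)) UNIV))"
    using image_compactin[OF cs[unfolded compact_space_def] cm] .
  moreover have "vec_lambda ` topspace (product_topology (\<lambda>_::'n. (euclidean :: 'a topology)) UNIV) = UNIV"
  proof -
    have "y \<in> range vec_lambda" for y :: "'a^'n"
      by (rule image_eqI[where x="vec_nth y"]) simp_all
    thus ?thesis by (simp add: PiE_UNIV_domain) blast
  qed
  ultimately show ?thesis by simp
qed

lemma quotient_cont:
  fixes G :: "'a::topological_space \<Rightarrow> 'b::t2_space" and f :: "'b \<Rightarrow> real"
  assumes cU: "compact (UNIV::'a set)" and cG: "continuous_on UNIV G"
    and rG: "range G = T" and cfG: "continuous_on UNIV (\<lambda>x. f (G x))"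
  shows "continuous_on T f"
proof -
  have "f \<in> T \<rightarrow> UNIV" by simp
  show ?thesis
    unfolding continuous_on_closed_gen[OF \<open>f \<in> T \<rightarrow> UNIV\<close>]
  proof (intro allI impI)
    fix C :: "real set" assume "closedin (top_of_set UNIV) C"
    hence "closed C" by simp
    let ?K = "(\<lambda>x. f (G x)) -` C"
    have "closed ((\<lambda>x. f (G x)) -` C \<inter> UNIV)"
      using iffD1[OF continuous_on_closed_vimage[OF closed_UNIV] cfG] \<open>closed C\<close> by blast
    hence cK: "closed ?K" by simp
    have "compact (UNIV \<inter> ?K)" by (rule compact_Int_closed[OF cU cK])
    hence "compact ?K" by simp
    hence "compact (G ` ?K)"
      by (rule compact_continuous_image[OF continuous_on_subset[OF cG subset_UNIV]])
    hence clo: "closed (G ` ?K)" by (rule compact_imp_closed)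
    have eq: "G ` ?K = T \<inter> f -` C"
    proof
      show "G ` ?K \<subseteq> T \<inter> f -` C" using rG by blast
      show "T \<inter> f -` C \<subseteq> G ` ?K" unfolding rG[symmetric] by blast
    qed
    have "closedin (top_of_set T) (T \<inter> G ` ?K)" by (rule closedin_closed_Int[OF clo])
    moreover have "T \<inter> G ` ?K = T \<inter> f -` C" using eq by blast
    ultimately show "closedin (top_of_set T) (T \<inter> f -` C)" by simp
  qed
qed

lemma ext_cdf_props:
  assumes N: "real_distribution N" and cont: "continuous_on UNIV (cdf N)"
  shows "continuous_on UNIV (ext_cdf (cdf N))" "range (ext_cdf (cdf N)) = {0..1}"
proof -
  interpret real_distribution N by (rule N)
  let ?E = "ext_cdf (cdf N)"
  have comp: "?E \<circ> ereal = cdf N" by (auto simp: ext_cdf_def)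
  have "isCont ?E x" for x
  proof (cases x)
    case (real r)
    have "(cdf N \<longlongrightarrow> cdf N r) (at r)" using cont
      by (simp add: continuous_on_eq_continuous_at continuous_at)
    hence "((?E \<circ> ereal) \<longlongrightarrow> ?E x) (at r)" using comp real by (simp add: ext_cdf_def)
    thus ?thesis unfolding real continuous_at unfolding at_ereal tendsto_compose_filtermap .
  next
    case PInf
    have "(cdf N \<longlongrightarrow> 1) at_top" by (rule cdf_lim_at_top_prob)
    hence t: "(?E \<longlongrightarrow> ?E x) (at_left \<infinity>)"
      unfolding at_left_PInf tendsto_compose_filtermap[symmetric] comp using PInf by (simp add: ext_cdf_def)
    have e: "at (\<infinity>::ereal) = at_left \<infinity>"
    proof -
      have "{..(\<infinity>::ereal)} = UNIV" by auto
      thus ?thesis using at_within_Iic_at_left[of "\<infinity>::ereal"] by simp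
    qed
    show ?thesis unfolding continuous_at using t[folded e] PInf by simp
  next
    case MInf
    have "(cdf N \<longlongrightarrow> 0) at_bot" by (rule cdf_lim_at_bot)
    hence t: "(?E \<longlongrightarrow> ?E x) (at_right (-\<infinity>))"
      unfolding at_right_MInf tendsto_compose_filtermap[symmetric] comp using MInf by (simp add: ext_cdf_def)
    have e: "at (-\<infinity>::ereal) = at_right (-\<infinity>)"
    proof -
      have "{(-\<infinity>::ereal)..} = UNIV" by auto
      thus ?thesis using at_within_Ici_at_right[of "-\<infinity>::ereal"] by simp
    qed
    show ?thesis unfolding continuous_at using t[folded e] MInf by simp
  qed
  thus c: "continuous_on UNIV ?E" by (simp add: continuous_on_eq_continuous_at)
  have sub: "range ?E \<subseteq> {0..1}"
    by (auto simp: ext_cdf_def cdf_nonneg cdf_bounded_prob)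
  have cu: "connected (UNIV::ereal set)" by simp
  have "connected (range ?E)" by (rule connected_continuous_image[OF c cu])
  moreover have "0 \<in> range ?E" by (rule image_eqI[where x="-\<infinity>"]) (auto simp: ext_cdf_def)
  moreover have "1 \<in> range ?E" by (rule image_eqI[where x="\<infinity>"]) (auto simp: ext_cdf_def)
  ultimately have "{0..1} \<subseteq> range ?E" by (rule connected_contains_Icc)
  with sub show "range ?E = {0..1}" by blast
qed



theorem lemma4p2:
  fixes \<mu> :: "(real^'p::finite) measure"
    and H :: "real^'p \<Rightarrow> real"
    and F :: "'p \<Rightarrow> real \<Rightarrow> real"
    and Mn :: "nat \<Rightarrow> 'w measure"
    and Hhat :: "nat \<Rightarrow> 'w \<Rightarrow> real^'p \<Rightarrow> real"
    and Fhat :: "nat \<Rightarrow> 'p \<Rightarrow> 'w \<Rightarrow> real \<Rightarrow> real"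
    and r :: "nat \<Rightarrow> real"
    and M :: "'v measure"
    and \<alpha> :: "'v \<Rightarrow> real^'p \<Rightarrow> real"
    and \<beta> :: "'p \<Rightarrow> 'v \<Rightarrow> real \<Rightarrow> real"
  assumes mu: "prob_space \<mu>" "sets \<mu> = sets borel"
    and H_def: "H = mcdf \<mu>"
    and F_def: "\<And>j. F j = (\<lambda>t. measure \<mu> {y. y $ j \<le> t})"
    and F_cont: "\<And>j. continuous_on UNIV (F j)"
    and Mn: "\<And>n. prob_space (Mn n)"
    and Hhat: "\<And>n \<omega>. \<omega> \<in> space (Mn n) \<Longrightarrow> is_mcdf (Hhat n \<omega>)"
    and Fhat: "\<And>n j \<omega>. \<omega> \<in> space (Mn n) \<Longrightarrow> is_cdf (Fhat n j \<omega>)"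
    and r_pos: "\<And>n. r n > 0"
    and r_lim: "filterlim r at_top sequentially"
    and M: "prob_space M"
    and \<alpha>_bdd: "\<And>\<omega>. \<omega> \<in> space M \<Longrightarrow> bounded (\<alpha> \<omega> ` cbox 0 1)"
    and \<beta>_bdd: "\<And>j \<omega>. \<omega> \<in> space M \<Longrightarrow> bounded (\<beta> j \<omega> ` {0..1})"
    and conv: "hj_weak_conv Mn
        (\<lambda>n \<omega> z. case z of
            Inl x \<Rightarrow> r n * (Hhat n \<omega> x - H x)
          | Inr (j, t) \<Rightarrow> r n * (Fhat n j \<omega> t - F j t))
        M
        (\<lambda>\<omega> z. case z of
            Inl x \<Rightarrow> \<alpha> \<omega> (\<chi> j. F j (x $ j))
          | Inr (j, t) \<Rightarrow> \<beta> j \<omega> (F j t))"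
    and \<alpha>F_cont: "AE \<omega> in M. continuous_on UNIV
        (\<lambda>x::ereal^'p. \<alpha> \<omega> (\<chi> j. ext_cdf (F j) (x $ j)))"
    and \<beta>F_cont: "\<And>j. AE \<omega> in M. continuous_on UNIV
        (\<lambda>x::ereal. \<beta> j \<omega> (ext_cdf (F j) x))"
  shows "AE \<omega> in M. continuous_on (cbox 0 1) (\<alpha> \<omega>) \<and>
                   (\<forall>j. continuous_on {0..1} (\<beta> j \<omega>))"
proof -
  have cE: "compact (UNIV :: ereal set)" by (rule compact_UNIV)
  have sp: "space \<mu> = UNIV" using sets_eq_imp_space_eq[OF mu(2)] by simp
  define N where "N j = distr \<mu> borel (\<lambda>y. y $ j)" for j
  have meas: "(\<lambda>y. y $ j) \<in> borel_measurable \<mu>" for j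
  proof -
    have "continuous_on UNIV (\<lambda>y::real^'p. y $ j)"
      by (simp add: continuous_on_eq_continuous_at continuous_at tendsto_vec_nth tendsto_ident_at)
    hence "(\<lambda>y::real^'p. y $ j) \<in> borel_measurable borel" by (rule borel_measurable_continuous_onI)
    thus ?thesis by (subst measurable_cong_sets[OF mu(2) refl])
  qed
  have RN: "real_distribution (N j)" for j
    unfolding N_def real_distribution_def real_distribution_axioms_def
    using prob_space.prob_space_distr[OF mu(1) meas] by simp
  have FN: "F j = cdf (N j)" for j
  proof
    fix t
    have "cdf (N j) t = measure \<mu> ((\<lambda>y. y $ j) -` {..t} \<inter> space \<mu>)"
      unfolding N_def cdf_def by (rule measure_distr[OF meas]) simp
    also have "\<dots> = F j t" using F_def sp by (simp add: vimage_def)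
    finally show "F j t = cdf (N j) t" by simp
  qed
  have cF: "continuous_on UNIV (ext_cdf (F j))" and rF: "range (ext_cdf (F j)) = {0..1}" for j
    using ext_cdf_props[OF RN] F_cont FN by metis+
  define G where "G x = (\<chi> j. ext_cdf (F j) (x $ j))" for x :: "ereal^'p"
  have cG: "continuous_on UNIV G"
    unfolding G_def continuous_on_def
  proof (intro ballI tendsto_vec_lambda)
    fix x :: "ereal^'p" and j
    have "isCont (ext_cdf (F j)) (x $ j)" using cF[of j] by (simp add: continuous_on_eq_continuous_at)
    moreover have "((\<lambda>x::ereal^'p. x $ j) \<longlongrightarrow> x $ j) (at x within UNIV)"
      by (intro tendsto_vec_nth tendsto_ident_at)
    ultimately show "((\<lambda>x. ext_cdf (F j) (x $ j)) \<longlongrightarrow> ext_cdf (F j) (x $ j)) (at x within UNIV)"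
      by (rule isCont_tendsto_compose)
  qed
  have rG: "range G = cbox 0 1"
  proof
    have inr: "ext_cdf (F j) e \<in> {0..1}" for j e using rF[of j] by (metis rangeI)
    show "range G \<subseteq> cbox 0 1"
    proof
      fix y assume "y \<in> range G"
      then obtain x where "y = G x" by blast
      thus "y \<in> cbox 0 1" using inr by (simp add: G_def mem_box_cart)
    qed
    show "cbox 0 1 \<subseteq> range G"
    proof
      fix u :: "real^'p" assume "u \<in> cbox 0 1"
      hence "\<forall>j. \<exists>e. ext_cdf (F j) e = u $ j" using rF by (auto simp: mem_box_cart) (metis atLeastAtMost_iff rangeE)
      then obtain e where e: "\<And>j. ext_cdf (F j) (e j) = u $ j" by metis
      show "u \<in> range G" by (rule image_eqI[where x="\<chi> j. e j"]) (auto simp: G_def e vec_eq_iff)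
    qed
  qed
  have AEb: "AE \<omega> in M. \<forall>j. continuous_on UNIV (\<lambda>x::ereal. \<beta> j \<omega> (ext_cdf (F j) x))"
    using \<beta>F_cont by (simp add: AE_all_countable)
  show ?thesis
    using \<alpha>F_cont AEb
  proof eventually_elim
    case (elim \<omega>)
    have "continuous_on (cbox 0 1) (\<alpha> \<omega>)"
      by (rule quotient_cont[OF compact_vec_UNIV[OF cE] cG rG]) (use elim in \<open>simp add: G_def\<close>)
    moreover have "continuous_on {0..1} (\<beta> j \<omega>)" for j
      by (rule quotient_cont[OF cE cF[of j] rF[of j]]) (use elim in simp)
    ultimately show ?case by blast
  qed
qed

end
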